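(* Let $0<L,W<\infty$, $\tau=iW/L$, $N\in\mathbb{N}$, and let $R_N$ be any of $A_{N-1},B_N,B_N^\vee,C_N,C_N^\vee,BC_N,D_N$. For $\mathbf{z}=(z_1,\dots,z_N)\in\mathbb{C}^N$, $z_j=x_j+iy_j$, define $q(\mathbf{z})=q^{R_N}(\mathbf{z})=C^{R_N}(\mathbf{z})\,W^{R_N}(\mathbf{z}/L;\tau)$. Then for every $m=1,\dots,N$, $$q(\sigma_m(L)\mathbf{z})=\mathrm{sgn}_{(L)}\,q(\mathbf{z}),\qquad q(\sigma_m(iW)\mathbf{z})=\mathrm{sgn}_{(iW)}\,e^{-2\pi i\mathcal{N}x_m/L}\,q(\mathbf{z}),$$ where $\mathrm{sgn}_{(L)}=1$ for $R_N=A_{N-1}$ with $N$ odd, $B_N^\vee$, $C_N$, $D_N$, and $\mathrm{sgn}_{(L)}=-1$ for $R_N=A_{N-1}$ with $N$ even, $B_N$, $C_N^\vee$, $BC_N$; and $\mathrm{sgn}_{(iW)}=1$ for $R_N=A_{N-1},C_N,C_N^\vee,BC_N,D_N$, $\mathrm{sgn}_{(iW)}=-1$ for $R_N=B_N,B_N^\vee$.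
   Context: Jacobi theta functions: for $v\in\mathbb{C}$, $\tau$ with $\Im\tau>0$, $q_0=e^{\pi i\tau}$: $\vartheta_0(v;\tau)=\sum_{n\in\mathbb{Z}}(-1)^nq_0^{n^2}e^{2\pi inv}$, $\vartheta_1(v;\tau)=i\sum_{n\in\mathbb{Z}}(-1)^nq_0^{(n-1/2)^2}e^{(2n-1)\pi iv}$, $\vartheta_2(v;\tau)=\sum_{n\in\mathbb{Z}}q_0^{(n-1/2)^2}e^{(2n-1)\pi iv}$, $\vartheta_3(v;\tau)=\sum_{n\in\mathbb{Z}}q_0^{n^2}e^{2\pi inv}$. The integer $\mathcal{N}=\mathcal{N}^{R_N}$ is: $N$ for $A_{N-1}$; $2N-1$ for $B_N$; $2N$ for $B_N^\vee,C_N^\vee$; $2(N+1)$ for $C_N$; $2N+1$ for $BC_N$; $2(N-1)$ for $D_N$. Macdonald denominators, for $\boldsymbol\xi\in\mathbb{C}^N$, with $P(\boldsymbol\xi)=\prod_{1\le j<k\le N}\vartheta_1(\xi_k-\xi_j;\tau)\vartheta_1(\xi_k+\xi_j;\tau)$: $W^{A_{N-1}}=\prod_{j<k}\vartheta_1(\xi_k-\xi_j;\tau)$; $W^{B_N}=\prod_\ell\vartheta_1(\xi_\ell;\tau)P$; $W^{B_N^\vee}=\prod_\ell\vartheta_1(2\xi_\ell;2\tau)P$; $W^{C_N}=\prod_\ell\vartheta_1(2\xi_\ell;\tau)P$; $W^{C_N^\vee}=\prod_\ell\vartheta_1(\xi_\ell;\tau/2)P$; $W^{BC_N}=\prod_\ell\vartheta_1(\xi_\ell;\tau)\vartheta_0(2\xi_\ell;2\tau)P$;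 $W^{D_N}=P$. Let $s(N)=0$ if $N$ is even and $s(N)=3$ if $N$ is odd. Define $C^{A_{N-1}}(\mathbf{z})=\exp(-\frac{\pi\mathcal{N}}{LW}\sum_j y_j^2)\,\vartheta_{s(N)}(\sum_k z_k/L;\tau)$ and $C^{R_N}(\mathbf{z})=\exp(-\frac{\pi\mathcal{N}}{LW}\sum_j y_j^2)$ for the other six types. $\mathbf{z}/L=(z_1/L,\dots,z_N/L)$. The shift operator $\sigma_m(w)$ replaces $z_m$ by $z_m+w$ and leaves the other coordinates unchanged. *)

theory Defs
  imports "HOL-Analysis.Analysis"
begin

definition theta0 :: "complex \<Rightarrow> complex \<Rightarrow> complex" where
  "theta0 v t = (\<Sum>\<^sub>\<infinity>n::int. (-1) powi n * exp (pi * \<i> * t * (of_int n)^2)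
                    * exp (2 * pi * \<i> * of_int n * v))"

definition theta1 :: "complex \<Rightarrow> complex \<Rightarrow> complex" where
  "theta1 v t = \<i> * (\<Sum>\<^sub>\<infinity>n::int. (-1) powi n * exp (pi * \<i> * t * (of_int n - 1/2)^2)
                    * exp ((2 * of_int n - 1) * pi * \<i> * v))"

definition theta2 :: "complex \<Rightarrow> complex \<Rightarrow> complex" where
  "theta2 v t = (\<Sum>\<^sub>\<infinity>n::int. exp (pi * \<i> * t * (of_int n - 1/2)^2)
                    * exp ((2 * of_int n - 1) * pi * \<i> * v))"

definition theta3 :: "complex \<Rightarrow> complex \<Rightarrow> complex" where
  "theta3 v t = (\<Sum>\<^sub>\<infinity>n::int. exp (pi * \<i> * t * (of_int n)^2)
                    * exp (2 * pi * \<i> * of_int n * v))"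

datatype rtype = A | B | Bv | C | Cv | BC | D

fun calN :: "rtype \<Rightarrow> nat \<Rightarrow> int" where
  "calN A N = int N"
| "calN B N = 2 * int N - 1"
| "calN Bv N = 2 * int N"
| "calN Cv N = 2 * int N"
| "calN C N = 2 * (int N + 1)"
| "calN BC N = 2 * int N + 1"
| "calN D N = 2 * (int N - 1)"

text \<open>Vectors in C^N are functions nat => complex, with coordinates indexed by 1..N.\<close>

definition Pfun :: "nat \<Rightarrow> complex \<Rightarrow> (nat \<Rightarrow> complex) \<Rightarrow> complex" where
  "Pfun N t \<xi> = (\<Prod>j\<in>{1..N}. \<Prod>k\<in>{j<..N}.
                    theta1 (\<xi> k - \<xi> j) t * theta1 (\<xi> k + \<xi> j) t)"

fun macW :: "rtype \<Rightarrow> nat \<Rightarrow> complex \<Rightarrow> (nat \<Rightarrow> complex) \<Rightarrow> complex" where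
  "macW A N t \<xi> = (\<Prod>j\<in>{1..N}. \<Prod>k\<in>{j<..N}. theta1 (\<xi> k - \<xi> j) t)"
| "macW B N t \<xi> = (\<Prod>l\<in>{1..N}. theta1 (\<xi> l) t) * Pfun N t \<xi>"
| "macW Bv N t \<xi> = (\<Prod>l\<in>{1..N}. theta1 (2 * \<xi> l) (2 * t)) * Pfun N t \<xi>"
| "macW C N t \<xi> = (\<Prod>l\<in>{1..N}. theta1 (2 * \<xi> l) t) * Pfun N t \<xi>"
| "macW Cv N t \<xi> = (\<Prod>l\<in>{1..N}. theta1 (\<xi> l) (t / 2)) * Pfun N t \<xi>"
| "macW BC N t \<xi> = (\<Prod>l\<in>{1..N}. theta1 (\<xi> l) t * theta0 (2 * \<xi> l) (2 * t)) * Pfun N t \<xi>"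
| "macW D N t \<xi> = Pfun N t \<xi>"

definition theta_s :: "nat \<Rightarrow> complex \<Rightarrow> complex \<Rightarrow> complex" where
  "theta_s N v t = (if even N then theta0 v t else theta3 v t)"

definition Cfac :: "rtype \<Rightarrow> nat \<Rightarrow> real \<Rightarrow> real \<Rightarrow> (nat \<Rightarrow> complex) \<Rightarrow> complex" where
  "Cfac R N L W z =
     complex_of_real (exp (- pi * of_int (calN R N) / (L * W) * (\<Sum>j\<in>{1..N}. (Im (z j))^2)))
     * (if R = A then theta_s N ((\<Sum>k\<in>{1..N}. z k) / of_real L) (\<i> * of_real W / of_real L) else 1)"

definition qfun :: "rtype \<Rightarrow> nat \<Rightarrow> real \<Rightarrow> real \<Rightarrow> (nat \<Rightarrow> complex) \<Rightarrow> complex" where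
  "qfun R N L W z = Cfac R N L W z * macW R N (\<i> * of_real W / of_real L) (\<lambda>j. z j / of_real L)"

definition shift :: "nat \<Rightarrow> complex \<Rightarrow> (nat \<Rightarrow> complex) \<Rightarrow> (nat \<Rightarrow> complex)" where
  "shift m w z = z(m := z m + w)"

fun sgnL :: "rtype \<Rightarrow> nat \<Rightarrow> complex" where
  "sgnL A N = (if odd N then 1 else -1)"
| "sgnL B N = -1"
| "sgnL Bv N = 1"
| "sgnL C N = 1"
| "sgnL Cv N = -1"
| "sgnL BC N = -1"
| "sgnL D N = 1"

fun sgniW :: "rtype \<Rightarrow> complex" where
  "sgniW B = -1"
| "sgniW Bv = -1"
| "sgniW _ = 1"

end

theory Submission
  imports Defs
begin

lemma infsum_shift1:
  fixes f g :: "int \<Rightarrow> complex"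
  assumes "\<And>n. f n = c * g (n+1)"
  shows "infsum f UNIV = c * infsum g UNIV"
proof -
  have "f = (\<lambda>n. c * g (n+1))" using assms by (intro ext) simp
  then have "infsum f UNIV = infsum (\<lambda>n. c * g (n+1)) UNIV" by simp
  also have "\<dots> = c * infsum (\<lambda>n. g (n+1)) UNIV" by (rule infsum_cmult_right')
  also have "infsum (\<lambda>n. g (n+1)) UNIV = infsum g UNIV"
    by (rule infsum_reindex_bij_betw) (auto simp: bij_betw_def inj_on_def image_iff intro!: exI[where x="_ - 1"])
  finally show ?thesis .
qed

lemma infsum_same:
  fixes f g :: "int \<Rightarrow> complex"
  assumes "\<And>n. f n = c * g n"
  shows "infsum f UNIV = c * infsum g UNIV"
proof -
  have "f = (\<lambda>n. c * g n)" using assms by (intro ext) simp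
  then show ?thesis using infsum_cmult_right'[of c g UNIV] by simp
qed

lemma exp_2pi_int: "exp (2 * complex_of_real pi * \<i> * of_int n) = 1"
  using exp_integer_2pi[of "of_int n"] by (simp add: mult_ac)

lemma powi_m1_succ: "(-1::complex) powi (n+1) = - ((-1) powi n)"
  by (simp add: power_int_add)

lemma theta1_plus1: "theta1 (v+1) t = - theta1 v t"
proof -
  have "(\<Sum>\<^sub>\<infinity>n::int. (-1) powi n * exp (pi * \<i> * t * (of_int n - 1/2)^2)
                    * exp ((2 * of_int n - 1) * pi * \<i> * (v+1)))
     = (-1) * (\<Sum>\<^sub>\<infinity>n::int. (-1) powi n * exp (pi * \<i> * t * (of_int n - 1/2)^2)
                    * exp ((2 * of_int n - 1) * pi * \<i> * v))"
  proof (rule infsum_same)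
    fix n :: int
    have "exp ((2 * of_int n - 1) * pi * \<i> * (v+1)) = exp ((2 * of_int n - 1) * pi * \<i> * v) * exp (2 * complex_of_real pi * \<i> * of_int n) * exp (- (pi * \<i>))"
    proof -
      have "(2 * of_int n - 1) * pi * \<i> * (v+1) = (2 * of_int n - 1) * pi * \<i> * v + 2 * complex_of_real pi * \<i> * of_int n + (- (pi * \<i>))"
        by (simp add: algebra_simps)
      then show ?thesis by (simp only: exp_add)
    qed
    also have "\<dots> = - exp ((2 * of_int n - 1) * pi * \<i> * v)"
      by (simp add: exp_2pi_int exp_minus)
    finally show "(-1) powi n * exp (pi * \<i> * t * (of_int n - 1/2)^2)
                    * exp ((2 * of_int n - 1) * pi * \<i> * (v+1)) = (-1) * ((-1) powi n * exp (pi * \<i> * t * (of_int n - 1/2)^2)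
                    * exp ((2 * of_int n - 1) * pi * \<i> * v))" by simp
  qed
  then show ?thesis by (simp add: theta1_def)
qed

lemma theta1_plus_t: "theta1 (v+t) t = - exp (- pi * \<i> * t - 2 * pi * \<i> * v) * theta1 v t"
proof -
  have "(\<Sum>\<^sub>\<infinity>n::int. (-1) powi n * exp (pi * \<i> * t * (of_int n - 1/2)^2)
                    * exp ((2 * of_int n - 1) * pi * \<i> * (v+t)))
     = (- exp (- pi * \<i> * t - 2 * pi * \<i> * v)) * (\<Sum>\<^sub>\<infinity>n::int. (-1) powi n * exp (pi * \<i> * t * (of_int n - 1/2)^2)
                    * exp ((2 * of_int n - 1) * pi * \<i> * v))"
  proof (rule infsum_shift1)
    fix n :: int
    have e: "exp (pi * \<i> * t * (of_int n - 1/2)^2) * exp ((2 * of_int n - 1) * pi * \<i> * (v+t))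
      = exp (- pi * \<i> * t - 2 * pi * \<i> * v) * (exp (pi * \<i> * t * (of_int (n+1) - 1/2)^2) * exp ((2 * of_int (n+1) - 1) * pi * \<i> * v))"
      by (simp add: mult_exp_exp power2_eq_square algebra_simps)
    show "(-1) powi n * exp (pi * \<i> * t * (of_int n - 1/2)^2)
                    * exp ((2 * of_int n - 1) * pi * \<i> * (v+t)) = (- exp (- pi * \<i> * t - 2 * pi * \<i> * v)) * ((-1) powi (n+1) * exp (pi * \<i> * t * (of_int (n+1) - 1/2)^2)
                    * exp ((2 * of_int (n+1) - 1) * pi * \<i> * v))"
      using e by (simp add: powi_m1_succ mult_ac)
  qed
  then show ?thesis by (simp add: theta1_def)
qed

lemma theta0_plus1: "theta0 (v+1) t = theta0 v t"
proof -
  have "(\<Sum>\<^sub>\<infinity>n::int. (-1) powi n * exp (pi * \<i> * t * (of_int n)^2) * exp (2 * pi * \<i> * of_int n * (v+1)))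
     = 1 * (\<Sum>\<^sub>\<infinity>n::int. (-1) powi n * exp (pi * \<i> * t * (of_int n)^2) * exp (2 * pi * \<i> * of_int n * v))"
  proof (rule infsum_same)
    fix n :: int
    have "exp (2 * pi * \<i> * of_int n * (v+1)) = exp (2 * pi * \<i> * of_int n * v) * exp (2 * complex_of_real pi * \<i> * of_int n)"
    proof -
      have "2 * pi * \<i> * of_int n * (v+1) = 2 * pi * \<i> * of_int n * v + 2 * complex_of_real pi * \<i> * of_int n"
        by (simp add: algebra_simps)
      then show ?thesis by (simp only: exp_add)
    qed
    then show "(-1) powi n * exp (pi * \<i> * t * (of_int n)^2) * exp (2 * pi * \<i> * of_int n * (v+1))
       = 1 * ((-1) powi n * exp (pi * \<i> * t * (of_int n)^2) * exp (2 * pi * \<i> * of_int n * v))"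
      by (simp add: exp_2pi_int)
  qed
  then show ?thesis by (simp add: theta0_def)
qed

lemma theta3_plus1: "theta3 (v+1) t = theta3 v t"
proof -
  have "(\<Sum>\<^sub>\<infinity>n::int. exp (pi * \<i> * t * (of_int n)^2) * exp (2 * pi * \<i> * of_int n * (v+1)))
     = 1 * (\<Sum>\<^sub>\<infinity>n::int. exp (pi * \<i> * t * (of_int n)^2) * exp (2 * pi * \<i> * of_int n * v))"
  proof (rule infsum_same)
    fix n :: int
    have "exp (2 * pi * \<i> * of_int n * (v+1)) = exp (2 * pi * \<i> * of_int n * v) * exp (2 * complex_of_real pi * \<i> * of_int n)"
    proof -
      have "2 * pi * \<i> * of_int n * (v+1) = 2 * pi * \<i> * of_int n * v + 2 * complex_of_real pi * \<i> * of_int n"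
        by (simp add: algebra_simps)
      then show ?thesis by (simp only: exp_add)
    qed
    then show "exp (pi * \<i> * t * (of_int n)^2) * exp (2 * pi * \<i> * of_int n * (v+1))
       = 1 * (exp (pi * \<i> * t * (of_int n)^2) * exp (2 * pi * \<i> * of_int n * v))"
      by (simp add: exp_2pi_int)
  qed
  then show ?thesis by (simp add: theta3_def)
qed

lemma theta0_plus_t: "theta0 (v+t) t = - exp (- pi * \<i> * t - 2 * pi * \<i> * v) * theta0 v t"
proof -
  have "(\<Sum>\<^sub>\<infinity>n::int. (-1) powi n * exp (pi * \<i> * t * (of_int n)^2) * exp (2 * pi * \<i> * of_int n * (v+t)))
     = (- exp (- pi * \<i> * t - 2 * pi * \<i> * v)) * (\<Sum>\<^sub>\<infinity>n::int. (-1) powi n * exp (pi * \<i> * t * (of_int n)^2) * exp (2 * pi * \<i> * of_int n * v))"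
  proof (rule infsum_shift1)
    fix n :: int
    have e: "exp (pi * \<i> * t * (of_int n)^2) * exp (2 * pi * \<i> * of_int n * (v+t))
      = exp (- pi * \<i> * t - 2 * pi * \<i> * v) * (exp (pi * \<i> * t * (of_int (n+1))^2) * exp (2 * pi * \<i> * of_int (n+1) * v))"
      by (simp add: mult_exp_exp power2_eq_square algebra_simps)
    show "(-1) powi n * exp (pi * \<i> * t * (of_int n)^2) * exp (2 * pi * \<i> * of_int n * (v+t))
       = (- exp (- pi * \<i> * t - 2 * pi * \<i> * v)) * ((-1) powi (n+1) * exp (pi * \<i> * t * (of_int (n+1))^2) * exp (2 * pi * \<i> * of_int (n+1) * v))"
      using e by (simp add: powi_m1_succ mult_ac)
  qed
  then show ?thesis by (simp add: theta0_def)
qed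

lemma theta3_plus_t: "theta3 (v+t) t = exp (- pi * \<i> * t - 2 * pi * \<i> * v) * theta3 v t"
proof -
  have "(\<Sum>\<^sub>\<infinity>n::int. exp (pi * \<i> * t * (of_int n)^2) * exp (2 * pi * \<i> * of_int n * (v+t)))
     = (exp (- pi * \<i> * t - 2 * pi * \<i> * v)) * (\<Sum>\<^sub>\<infinity>n::int. exp (pi * \<i> * t * (of_int n)^2) * exp (2 * pi * \<i> * of_int n * v))"
  proof (rule infsum_shift1)
    fix n :: int
    show "exp (pi * \<i> * t * (of_int n)^2) * exp (2 * pi * \<i> * of_int n * (v+t))
      = exp (- pi * \<i> * t - 2 * pi * \<i> * v) * (exp (pi * \<i> * t * (of_int (n+1))^2) * exp (2 * pi * \<i> * of_int (n+1) * v))"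
      by (simp add: mult_exp_exp power2_eq_square algebra_simps)
  qed
  then show ?thesis by (simp add: theta3_def)
qed

lemma theta1_minus1: "theta1 (v-1) t = - theta1 v t"
  using theta1_plus1[of "v-1" t] by simp

lemma theta1_minus_t: "theta1 (v-t) t = - exp (- pi * \<i> * t + 2 * pi * \<i> * v) * theta1 v t"
proof -
  have "theta1 v t = - exp (- pi * \<i> * t - 2 * pi * \<i> * (v-t)) * theta1 (v-t) t"
    using theta1_plus_t[of "v-t" t] by simp
  moreover have "exp (- pi * \<i> * t + 2 * pi * \<i> * v) * exp (- pi * \<i> * t - 2 * pi * \<i> * (v-t)) = 1"
    by (simp add: mult_exp_exp algebra_simps)
  ultimately show ?thesis
    by (metis (no_types, lifting) minus_mult_minus mult.assoc mult_1 mult_minus_left)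
qed

lemma theta1_plus_2t: "theta1 (v + 2*t) t = exp (- 4 * pi * \<i> * t - 4 * pi * \<i> * v) * theta1 v t"
proof -
  have "theta1 (v + 2*t) t = theta1 ((v+t)+t) t" by (simp add: algebra_simps)
  also have "\<dots> = exp (- pi * \<i> * t - 2 * pi * \<i> * (v+t)) * exp (- pi * \<i> * t - 2 * pi * \<i> * v) * theta1 v t"
    unfolding theta1_plus_t by simp
  also have "exp (- pi * \<i> * t - 2 * pi * \<i> * (v+t)) * exp (- pi * \<i> * t - 2 * pi * \<i> * v) = exp (- 4 * pi * \<i> * t - 4 * pi * \<i> * v)"
    by (simp add: mult_exp_exp algebra_simps)
  finally show ?thesis .
qed

lemma pair_prod:
  fixes N m :: nat and h :: "nat \<Rightarrow> complex"
  assumes "1 \<le> m"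
  shows "(\<Prod>j\<in>{1..N}. \<Prod>k\<in>{j<..N}. (if j = m then h k else if k = m then h j else 1))
     = (if m \<le> N then (\<Prod>i\<in>{1..N}-{m}. h i) else (1::complex))"
proof (induction N)
  case 0
  then show ?case by simp
next
  case (Suc N)
  let ?F = "\<lambda>j k. (if j = m then h k else if k = m then h j else (1::complex))"
  have "(\<Prod>j\<in>{1..Suc N}. \<Prod>k\<in>{j<..Suc N}. ?F j k) = (\<Prod>j\<in>{1..N}. \<Prod>k\<in>{j<..Suc N}. ?F j k)"
    by (simp add: atLeastAtMostSuc_conv)
  also have "\<dots> = (\<Prod>j\<in>{1..N}. (\<Prod>k\<in>{j<..N}. ?F j k) * ?F j (Suc N))"
  proof (rule prod.cong)
    fix j assume "j \<in> {1..N}"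
    then have "{j<..Suc N} = insert (Suc N) {j<..N}" by auto
    then show "(\<Prod>k\<in>{j<..Suc N}. ?F j k) = (\<Prod>k\<in>{j<..N}. ?F j k) * ?F j (Suc N)"
      by (simp add: mult.commute)
  qed simp
  also have "\<dots> = (\<Prod>j\<in>{1..N}. \<Prod>k\<in>{j<..N}. ?F j k) * (\<Prod>j\<in>{1..N}. ?F j (Suc N))"
    by (rule prod.distrib)
  also have "\<dots> = (if m \<le> Suc N then (\<Prod>i\<in>{1..Suc N}-{m}. h i) else 1)"
  proof (cases "m \<le> N")
    case True
    have "(\<Prod>j\<in>{1..N}. ?F j (Suc N)) = (\<Prod>j\<in>{1..N}. if j = m then h (Suc N) else 1)"
      using True by (intro prod.cong) auto
    also have "\<dots> = h (Suc N)" using True assms by (simp add: prod.delta)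
    finally have 1: "(\<Prod>j\<in>{1..N}. ?F j (Suc N)) = h (Suc N)" .
    have "{1..Suc N}-{m} = insert (Suc N) ({1..N}-{m})" using True by auto
    then have "(\<Prod>i\<in>{1..Suc N}-{m}. h i) = h (Suc N) * (\<Prod>i\<in>{1..N}-{m}. h i)" by simp
    then show ?thesis using Suc True 1 by (simp add: mult.commute)
  next
    case False
    show ?thesis
    proof (cases "m = Suc N")
      case True
      have "(\<Prod>j\<in>{1..N}. ?F j (Suc N)) = (\<Prod>j\<in>{1..N}. h j)"
        using True by (intro prod.cong) auto
      moreover have "{1..Suc N}-{m} = {1..N}" using True by auto
      ultimately show ?thesis using Suc False True by simp
    next
      case F2: False
      have "(\<Prod>j\<in>{1..N}. ?F j (Suc N)) = (\<Prod>j\<in>{1..N}. 1)"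
        using False F2 by (intro prod.cong) auto
      then show ?thesis using Suc False F2 by simp
    qed
  qed
  finally show ?case .
qed

lemma pair_shift:
  fixes N m :: nat and h :: "nat \<Rightarrow> complex"
  assumes "1 \<le> m" "m \<le> N"
    and "\<And>j k. j \<in> {1..N} \<Longrightarrow> k \<in> {j<..N} \<Longrightarrow> g' j k = (if j = m then h k else if k = m then h j else 1) * g j k"
  shows "(\<Prod>j\<in>{1..N}. \<Prod>k\<in>{j<..N}. g' j k) = (\<Prod>i\<in>{1..N}-{m}. h i) * (\<Prod>j\<in>{1..N}. \<Prod>k\<in>{j<..N}. (g j k :: complex))"
proof -
  have "(\<Prod>j\<in>{1..N}. \<Prod>k\<in>{j<..N}. g' j k) = (\<Prod>j\<in>{1..N}. (\<Prod>k\<in>{j<..N}. (if j = m then h k else if k = m then h j else 1)) * (\<Prod>k\<in>{j<..N}. g j k))"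
    using assms(3) by (simp add: prod.distrib[symmetric])
  also have "\<dots> = (\<Prod>j\<in>{1..N}. \<Prod>k\<in>{j<..N}. (if j = m then h k else if k = m then h j else 1)) * (\<Prod>j\<in>{1..N}. \<Prod>k\<in>{j<..N}. g j k)"
    by (rule prod.distrib)
  finally show ?thesis using pair_prod[OF assms(1), where N=N and h=h] assms(2) by simp
qed

lemma single_shift:
  assumes "m \<in> S" "finite S" "\<And>l. l \<in> S \<Longrightarrow> g' l = (if l = m then c else 1) * g l"
  shows "prod g' S = c * (prod g S :: complex)"
proof -
  have "prod g' S = (\<Prod>l\<in>S. (if l = m then c else 1)) * prod g S"
    using assms(3) by (simp add: prod.distrib[symmetric])
  then show ?thesis using assms(1,2) by (simp add: prod.delta)
qed

definition uu :: "complex \<Rightarrow> complex \<Rightarrow> complex" where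
  "uu t a = exp (- pi * \<i> * t - 2 * pi * \<i> * a)"

lemma uu_pow: "uu t a ^ k = exp (of_nat k * (- pi * \<i> * t - 2 * pi * \<i> * a))"
  by (simp add: uu_def exp_of_nat_mult)

lemma P1a: "theta1 (b - (a+1)) t * theta1 (b + (a+1)) t = theta1 (b-a) t * theta1 (b+a) t"
proof -
  have e: "b - (a+1) = (b-a) - 1" "b + (a+1) = (b+a) + 1" by simp_all
  show ?thesis unfolding e by (simp add: theta1_minus1 theta1_plus1)
qed

lemma P1b: "theta1 ((a+1) - b) t * theta1 ((a+1) + b) t = theta1 (a-b) t * theta1 (a+b) t"
proof -
  have e: "(a+1) - b = (a-b) + 1" "(a+1) + b = (a+b) + 1" by simp_all
  show ?thesis unfolding e by (simp add: theta1_plus1)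
qed

lemma Pta: "theta1 (b - (a+t)) t * theta1 (b + (a+t)) t = uu t a ^ 2 * (theta1 (b-a) t * theta1 (b+a) t)"
proof -
  have e: "b - (a+t) = (b-a) - t" "b + (a+t) = (b+a) + t" by simp_all
  have "theta1 (b - (a+t)) t * theta1 (b + (a+t)) t =
     (exp (- pi * \<i> * t + 2 * pi * \<i> * (b-a)) * exp (- pi * \<i> * t - 2 * pi * \<i> * (b+a))) * (theta1 (b-a) t * theta1 (b+a) t)"
    unfolding e by (simp add: theta1_minus_t theta1_plus_t)
  also have "exp (- pi * \<i> * t + 2 * pi * \<i> * (b-a)) * exp (- pi * \<i> * t - 2 * pi * \<i> * (b+a)) = uu t a ^ 2"
    unfolding uu_pow mult_exp_exp by (simp add: algebra_simps)
  finally show ?thesis .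
qed

lemma Ptb: "theta1 ((a+t) - b) t * theta1 ((a+t) + b) t = uu t a ^ 2 * (theta1 (a-b) t * theta1 (a+b) t)"
proof -
  have e: "(a+t) - b = (a-b) + t" "(a+t) + b = (a+b) + t" by simp_all
  have "theta1 ((a+t) - b) t * theta1 ((a+t) + b) t =
     (exp (- pi * \<i> * t - 2 * pi * \<i> * (a-b)) * exp (- pi * \<i> * t - 2 * pi * \<i> * (a+b))) * (theta1 (a-b) t * theta1 (a+b) t)"
    unfolding e by (simp add: theta1_plus_t)
  also have "exp (- pi * \<i> * t - 2 * pi * \<i> * (a-b)) * exp (- pi * \<i> * t - 2 * pi * \<i> * (a+b)) = uu t a ^ 2"
    unfolding uu_pow mult_exp_exp by (simp add: algebra_simps)
  finally show ?thesis .
qed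

lemma card_minus_m: "m \<in> {1..N} \<Longrightarrow> card ({1..N::nat} - {m}) = N - 1"
  by simp

lemma Pfun_shift1:
  assumes "m \<in> {1..N}"
  shows "Pfun N t (x(m := x m + 1)) = Pfun N t x"
proof -
  have "Pfun N t (x(m := x m + 1)) = (\<Prod>i\<in>{1..N}-{m}. 1) * Pfun N t x"
    unfolding Pfun_def
  proof (rule pair_shift)
    fix j k assume jk: "j \<in> {1..N}" "k \<in> {j<..N}"
    show "theta1 ((x(m := x m + 1)) k - (x(m := x m + 1)) j) t * theta1 ((x(m := x m + 1)) k + (x(m := x m + 1)) j) t
       = (if j = m then 1 else if k = m then 1 else 1) * (theta1 (x k - x j) t * theta1 (x k + x j) t)"
      using jk by (auto simp: P1a P1b)
  qed (use assms in auto)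
  then show ?thesis by simp
qed

lemma Pfun_shiftt:
  assumes "m \<in> {1..N}"
  shows "Pfun N t (x(m := x m + t)) = uu t (x m) ^ (2 * (N - 1)) * Pfun N t x"
proof -
  have "Pfun N t (x(m := x m + t)) = (\<Prod>i\<in>{1..N}-{m}. uu t (x m) ^ 2) * Pfun N t x"
    unfolding Pfun_def
  proof (rule pair_shift)
    fix j k assume jk: "j \<in> {1..N}" "k \<in> {j<..N}"
    show "theta1 ((x(m := x m + t)) k - (x(m := x m + t)) j) t * theta1 ((x(m := x m + t)) k + (x(m := x m + t)) j) t
       = (if j = m then uu t (x m) ^ 2 else if k = m then uu t (x m) ^ 2 else 1) * (theta1 (x k - x j) t * theta1 (x k + x j) t)"
      using jk by (auto simp: Pta Ptb)
  qed (use assms in auto)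
  then show ?thesis using assms by (simp add: power_mult)
qed

lemma A1a: "theta1 (b - (a+1)) t = - theta1 (b-a) t"
proof -
  have e: "b - (a+1) = (b-a) - 1" by simp
  show ?thesis unfolding e by (simp add: theta1_minus1)
qed

lemma A1b: "theta1 ((a+1) - b) t = - theta1 (a-b) t"
proof -
  have e: "(a+1) - b = (a-b) + 1" by simp
  show ?thesis unfolding e by (simp add: theta1_plus1)
qed

lemma Ata: "theta1 (b - (a+t)) t = - uu t a * exp (2 * pi * \<i> * b) * theta1 (b-a) t"
proof -
  have e: "b - (a+t) = (b-a) - t" by simp
  have "exp (- pi * \<i> * t + 2 * pi * \<i> * (b-a)) = uu t a * exp (2 * pi * \<i> * b)"
    unfolding uu_def mult_exp_exp by (simp add: algebra_simps)
  then show ?thesis unfolding e theta1_minus_t by simp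
qed

lemma Atb: "theta1 ((a+t) - b) t = - uu t a * exp (2 * pi * \<i> * b) * theta1 (a-b) t"
proof -
  have e: "(a+t) - b = (a-b) + t" by simp
  have "exp (- pi * \<i> * t - 2 * pi * \<i> * (a-b)) = uu t a * exp (2 * pi * \<i> * b)"
    unfolding uu_def mult_exp_exp by (simp add: algebra_simps)
  then show ?thesis unfolding e theta1_plus_t by simp
qed

lemma macW_A1:
  assumes "m \<in> {1..N}"
  shows "macW A N t (x(m := x m + 1)) = (\<Prod>i\<in>{1..N}-{m}. -1) * macW A N t x"
  unfolding macW.simps
proof (rule pair_shift)
  fix j k assume jk: "j \<in> {1..N}" "k \<in> {j<..N}"
  show "theta1 ((x(m := x m + 1)) k - (x(m := x m + 1)) j) t
     = (if j = m then -1 else if k = m then -1 else 1) * theta1 (x k - x j) t"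
    using jk by (auto simp: A1a A1b)
qed (use assms in auto)

lemma macW_At:
  assumes "m \<in> {1..N}"
  shows "macW A N t (x(m := x m + t)) = (\<Prod>i\<in>{1..N}-{m}. - uu t (x m) * exp (2 * pi * \<i> * x i)) * macW A N t x"
  unfolding macW.simps
proof (rule pair_shift)
  fix j k assume jk: "j \<in> {1..N}" "k \<in> {j<..N}"
  show "theta1 ((x(m := x m + t)) k - (x(m := x m + t)) j) t
     = (if j = m then - uu t (x m) * exp (2 * pi * \<i> * x k) else if k = m then - uu t (x m) * exp (2 * pi * \<i> * x j) else 1) * theta1 (x k - x j) t"
    using jk by (auto simp: Ata Atb)
qed (use assms in auto)

lemma theta_s_plus1: "theta_s N (v+1) t = theta_s N v t"
  by (simp add: theta_s_def theta0_plus1 theta3_plus1)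

lemma theta_s_plus_t: "theta_s N (v+t) t = (if even N then -1 else 1) * exp (- pi * \<i> * t - 2 * pi * \<i> * v) * theta_s N v t"
  by (simp add: theta_s_def theta0_plus_t theta3_plus_t)

lemma A_combine:
  assumes "m \<in> {1..N}"
  shows "(\<Prod>i\<in>{1..N}-{m}. - uu t (x m) * exp (2 * pi * \<i> * x i)) *
     ((if even N then -1 else 1) * exp (- pi * \<i> * t - 2 * pi * \<i> * (\<Sum>k\<in>{1..N}. x k)))
     = uu t (x m) ^ N"
proof -
  let ?u = "uu t (x m)"
  have "(\<Prod>i\<in>{1..N}-{m}. - ?u * exp (2 * pi * \<i> * x i)) = (\<Prod>i\<in>{1..N}-{m}. - ?u) * (\<Prod>i\<in>{1..N}-{m}. exp (2 * pi * \<i> * x i))"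
    by (rule prod.distrib)
  also have "\<dots> = (- ?u) ^ (N-1) * exp (\<Sum>i\<in>{1..N}-{m}. 2 * pi * \<i> * x i)"
    using assms by (simp only: prod_constant card_minus_m exp_sum finite_Diff finite_atLeastAtMost)
  also have "(\<Sum>i\<in>{1..N}-{m}. 2 * pi * \<i> * x i) = 2 * pi * \<i> * (\<Sum>k\<in>{1..N}. x k) - 2 * pi * \<i> * x m"
    using assms by (simp add: sum_diff1 sum_distrib_left)
  finally have p: "(\<Prod>i\<in>{1..N}-{m}. - ?u * exp (2 * pi * \<i> * x i)) = (- ?u) ^ (N-1) * exp (2 * pi * \<i> * (\<Sum>k\<in>{1..N}. x k) - 2 * pi * \<i> * x m)" .
  have e: "exp (2 * pi * \<i> * (\<Sum>k\<in>{1..N}. x k) - 2 * pi * \<i> * x m) * exp (- pi * \<i> * t - 2 * pi * \<i> * (\<Sum>k\<in>{1..N}. x k)) = ?u"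
    unfolding uu_def mult_exp_exp by (simp add: algebra_simps)
  obtain k where N: "N = Suc k" using assms by (cases N) auto
  have s: "(- ?u) ^ k * (if even N then -1 else 1) * ?u = ?u ^ N"
  proof (cases "even k")
    case True
    have a: "(- ?u) ^ k = ?u ^ k" using True by (rule power_minus_even)
    have b: "(if even (Suc k) then -1 else (1::complex)) = 1" using True N by simp
    show ?thesis unfolding a N b by (simp only: power_Suc mult_1_right mult_1_left mult.commute)
  next
    case False
    have a: "(- ?u) ^ k = - (?u ^ k)" using False by (rule power_minus_odd)
    have b: "(if even (Suc k) then -1 else (1::complex)) = -1" using False N by simp
    show ?thesis unfolding a N b by (simp only: power_Suc mult_minus_right mult_minus_left minus_minus mult_1_right mult_1_left mult.commute)
  qed
  let ?E1 = "exp (2 * pi * \<i> * (\<Sum>k\<in>{1..N}. x k) - 2 * pi * \<i> * x m)"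
  let ?E2 = "exp (- pi * \<i> * t - 2 * pi * \<i> * (\<Sum>k\<in>{1..N}. x k))"
  have "(- ?u) ^ (N-1) * ?E1 * ((if even N then -1 else 1) * ?E2) = ((- ?u) ^ (N-1) * (if even N then -1 else 1)) * (?E1 * ?E2)"
    by (simp only: mult_ac)
  also have "\<dots> = ?u ^ N" unfolding e using s N by simp
  finally show ?thesis unfolding p .
qed

lemma sgnA: "1 \<le> N \<Longrightarrow> (-1::complex) ^ (N - 1) = (if odd N then 1 else -1)"
  by (cases N) auto

lemma Bv1: "theta1 (2 * (a+1)) (2*t) = theta1 (2*a) (2*t)"
proof -
  have e: "2 * (a+1) = (2*a + 1) + 1" by simp
  show ?thesis unfolding e theta1_plus1 by simp
qed

lemma Bv1': "theta1 (2*a + 2) (2*t) = theta1 (2*a) (2*t)"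
  using Bv1[of a t] by (simp add: algebra_simps)

lemma C1: "theta1 (2 * (a+1)) t = theta1 (2*a) t"
proof -
  have e: "2 * (a+1) = (2*a + 1) + 1" by simp
  show ?thesis unfolding e theta1_plus1 by simp
qed

lemma C1': "theta1 (2*a + 2) t = theta1 (2*a) t"
  using C1[of a t] by (simp add: algebra_simps)

lemma BC1: "theta1 (a+1) t * theta0 (2 * (a+1)) (2*t) = - (theta1 a t * theta0 (2*a) (2*t))"
proof -
  have e: "2 * (a+1) = (2*a + 1) + 1" by simp
  show ?thesis unfolding e theta1_plus1 theta0_plus1 by simp
qed

lemma BC1': "theta1 (a+1) t * theta0 (2*a+2) (2*t) = - (theta1 a t * theta0 (2*a) (2*t))"
  using BC1[of a t] by (simp add: algebra_simps)

lemma Bt: "theta1 (a+t) t = - uu t a * theta1 a t"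
  unfolding theta1_plus_t uu_def by simp

lemma Bvt: "theta1 (2 * (a+t)) (2*t) = - (uu t a ^ 2) * theta1 (2*a) (2*t)"
proof -
  have e: "2 * (a+t) = 2*a + 2*t" by (simp add: algebra_simps)
  have "exp (- pi * \<i> * (2*t) - 2 * pi * \<i> * (2*a)) = uu t a ^ 2"
    unfolding uu_pow by (simp add: algebra_simps)
  then show ?thesis unfolding e theta1_plus_t by simp
qed

lemma Bvt': "theta1 (2*a + 2*t) (2*t) = - (uu t a ^ 2 * theta1 (2*a) (2*t))"
  using Bvt[of a t] by (simp add: algebra_simps)

lemma Ct: "theta1 (2 * (a+t)) t = uu t a ^ 4 * theta1 (2*a) t"
proof -
  have e: "2 * (a+t) = 2*a + 2*t" by (simp add: algebra_simps)
  have "exp (- 4 * pi * \<i> * t - 4 * pi * \<i> * (2*a)) = uu t a ^ 4"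
    unfolding uu_pow by (simp add: algebra_simps)
  then show ?thesis unfolding e theta1_plus_2t by simp
qed

lemma Ct': "theta1 (2*a + 2*t) t = uu t a ^ 4 * theta1 (2*a) t"
  using Ct[of a t] by (simp add: algebra_simps)

lemma Cvt: "theta1 (a+t) (t/2) = uu t a ^ 2 * theta1 a (t/2)"
proof -
  have e: "a + t = a + 2*(t/2)" by simp
  have "exp (- 4 * pi * \<i> * (t/2) - 4 * pi * \<i> * a) = uu t a ^ 2"
    unfolding uu_pow by (simp add: algebra_simps)
  then show ?thesis unfolding e theta1_plus_2t by simp
qed

lemma BCt: "theta1 (a+t) t * theta0 (2 * (a+t)) (2*t) = uu t a ^ 3 * (theta1 a t * theta0 (2*a) (2*t))"
proof -
  have e: "2 * (a+t) = 2*a + 2*t" by (simp add: algebra_simps)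
  have "exp (- pi * \<i> * (2*t) - 2 * pi * \<i> * (2*a)) = uu t a ^ 2"
    unfolding uu_pow by (simp add: algebra_simps)
  then have "theta0 (2 * (a+t)) (2*t) = - (uu t a ^ 2) * theta0 (2*a) (2*t)"
    unfolding e theta0_plus_t by simp
  then show ?thesis unfolding Bt by (simp add: power_numeral_reduce)
qed

lemma BCt': "theta1 (a+t) t * theta0 (2*a + 2*t) (2*t) = uu t a ^ 3 * (theta1 a t * theta0 (2*a) (2*t))"
  using BCt[of a t] by (simp add: algebra_simps)

lemma macW_1:
  assumes m: "m \<in> {1..N}"
  shows "macW R N t (x(m := x m + 1)) = sgnL R N * macW R N t x"
proof (cases R)
  case A
  have "1 \<le> N" using m by simp
  then show ?thesis using macW_A1[OF m, of t x] m A by (simp add: sgnA)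
next
  case B
  have "(\<Prod>l\<in>{1..N}. theta1 ((x(m := x m + 1)) l) t) = (-1) * (\<Prod>l\<in>{1..N}. theta1 (x l) t)"
    by (rule single_shift[OF m]) (auto simp: theta1_plus1)
  then show ?thesis using B Pfun_shift1[OF m] by simp
next
  case Bv
  have "(\<Prod>l\<in>{1..N}. theta1 (2 * (x(m := x m + 1)) l) (2*t)) = 1 * (\<Prod>l\<in>{1..N}. theta1 (2 * x l) (2*t))"
    by (rule single_shift[OF m]) (auto simp: Bv1 Bv1')
  then show ?thesis using Bv Pfun_shift1[OF m] by simp
next
  case C
  have "(\<Prod>l\<in>{1..N}. theta1 (2 * (x(m := x m + 1)) l) t) = 1 * (\<Prod>l\<in>{1..N}. theta1 (2 * x l) t)"
    by (rule single_shift[OF m]) (auto simp: C1 C1')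
  then show ?thesis using C Pfun_shift1[OF m] by simp
next
  case Cv
  have "(\<Prod>l\<in>{1..N}. theta1 ((x(m := x m + 1)) l) (t/2)) = (-1) * (\<Prod>l\<in>{1..N}. theta1 (x l) (t/2))"
    by (rule single_shift[OF m]) (auto simp: theta1_plus1)
  then show ?thesis using Cv Pfun_shift1[OF m] by simp
next
  case BC
  have "(\<Prod>l\<in>{1..N}. theta1 ((x(m := x m + 1)) l) t * theta0 (2 * (x(m := x m + 1)) l) (2*t))
     = (-1) * (\<Prod>l\<in>{1..N}. theta1 (x l) t * theta0 (2 * x l) (2*t))"
    by (rule single_shift[OF m]) (auto simp: BC1 BC1')
  then show ?thesis using BC Pfun_shift1[OF m] by simp
next
  case D
  then show ?thesis using Pfun_shift1[OF m] by simp
qed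

lemma macW_t:
  assumes m: "m \<in> {1..N}" and R: "R \<noteq> A"
  shows "macW R N t (x(m := x m + t)) = sgniW R * uu t (x m) ^ nat (calN R N) * macW R N t x"
proof (cases R)
  case A
  then show ?thesis using R by simp
next
  case B
  have "(\<Prod>l\<in>{1..N}. theta1 ((x(m := x m + t)) l) t) = (- uu t (x m)) * (\<Prod>l\<in>{1..N}. theta1 (x l) t)"
    by (rule single_shift[OF m]) (auto simp: Bt)
  moreover have "nat (calN R N) = Suc (2 * (N - 1))" using B m by auto
  ultimately show ?thesis using B Pfun_shiftt[OF m] by (simp add: mult_ac)
next
  case Bv
  have "(\<Prod>l\<in>{1..N}. theta1 (2 * (x(m := x m + t)) l) (2*t)) = (- (uu t (x m) ^ 2)) * (\<Prod>l\<in>{1..N}. theta1 (2 * x l) (2*t))"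
    by (rule single_shift[OF m]) (auto simp: Bvt Bvt')
  moreover have "nat (calN R N) = 2 + 2 * (N - 1)" using Bv m by auto
  ultimately show ?thesis using Bv Pfun_shiftt[OF m] by (simp add: mult_ac power_add power2_eq_square)
next
  case C
  have "(\<Prod>l\<in>{1..N}. theta1 (2 * (x(m := x m + t)) l) t) = (uu t (x m) ^ 4) * (\<Prod>l\<in>{1..N}. theta1 (2 * x l) t)"
    by (rule single_shift[OF m]) (auto simp: Ct Ct')
  moreover have "nat (calN R N) = 4 + 2 * (N - 1)" using C m by auto
  ultimately show ?thesis using C Pfun_shiftt[OF m] by (simp add: mult_ac power_add)
next
  case Cv
  have "(\<Prod>l\<in>{1..N}. theta1 ((x(m := x m + t)) l) (t/2)) = (uu t (x m) ^ 2) * (\<Prod>l\<in>{1..N}. theta1 (x l) (t/2))"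
    by (rule single_shift[OF m]) (auto simp: Cvt)
  moreover have "nat (calN R N) = 2 + 2 * (N - 1)" using Cv m by auto
  ultimately show ?thesis using Cv Pfun_shiftt[OF m] by (simp add: mult_ac power_add power2_eq_square)
next
  case BC
  have "(\<Prod>l\<in>{1..N}. theta1 ((x(m := x m + t)) l) t * theta0 (2 * (x(m := x m + t)) l) (2*t))
     = (uu t (x m) ^ 3) * (\<Prod>l\<in>{1..N}. theta1 (x l) t * theta0 (2 * x l) (2*t))"
    by (rule single_shift[OF m]) (auto simp: BCt BCt')
  moreover have "nat (calN R N) = 3 + 2 * (N - 1)" using BC m by auto
  ultimately show ?thesis using BC Pfun_shiftt[OF m] by (simp add: mult_ac power_add)
next
  case D
  have "nat (calN R N) = 2 * (N - 1)" using D m by auto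
  then show ?thesis using D Pfun_shiftt[OF m] by simp
qed

lemma sum_upd:
  fixes f :: "nat \<Rightarrow> 'a::ab_group_add"
  assumes "m \<in> S" "finite S"
  shows "sum (f(m := v)) S = sum f S + (v - f m)"
proof -
  have "sum (f(m := v)) S = v + sum (f(m := v)) (S - {m})"
    using assms by (simp add: sum.remove)
  also have "sum (f(m := v)) (S - {m}) = sum f (S - {m})" by (intro sum.cong) auto
  also have "sum f S = f m + sum f (S - {m})" using assms by (simp add: sum.remove)
  ultimately show ?thesis by (simp add: algebra_simps)
qed

lemma core:
  fixes L W y xr :: real and k :: int
  assumes "0 \<le> k" "0 < L" "0 < W"
  shows "complex_of_real (exp (- pi * of_int k / (L*W) * (2*W*y + W^2))) *
    exp (of_nat (nat k) * (- pi * \<i> * (\<i> * of_real W / of_real L) - 2*pi*\<i>*(Complex xr y / of_real L)))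
    = exp (- 2 * pi * \<i> * of_int k * of_real xr / of_real L)"
proof -
  have k: "(of_nat (nat k) :: complex) = of_int k" using assms by simp
  have "complex_of_real (exp (- pi * of_int k / (L*W) * (2*W*y + W^2))) = exp (of_real (- pi * of_int k / (L*W) * (2*W*y + W^2)))"
    by (simp only: exp_of_real)
  moreover have "of_real (- pi * of_int k / (L*W) * (2*W*y + W^2)) + of_int k * (- pi * \<i> * (\<i> * of_real W / of_real L) - 2*pi*\<i>*(Complex xr y / of_real L))
     = - 2 * pi * \<i> * of_int k * of_real xr / (of_real L :: complex)"
  proof -
    have L0: "(of_real L :: complex) \<noteq> 0" "(of_real W :: complex) \<noteq> 0" using assms by auto
    have cx: "Complex xr y = of_real xr + \<i> * of_real y" by (simp add: complex_eq_iff)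
    show ?thesis using L0 unfolding cx
      by (simp add: field_simps power2_eq_square)
  qed
  ultimately show ?thesis unfolding k by (simp add: mult_exp_exp)
qed

theorem lemma2p1:
  fixes L W :: real and N m :: nat and R :: rtype and z :: "nat \<Rightarrow> complex"
  assumes "0 < L" and "0 < W" and "m \<in> {1..N}"
  shows "qfun R N L W (shift m (of_real L) z) = sgnL R N * qfun R N L W z
    \<and> qfun R N L W (shift m (\<i> * of_real W) z) =
           sgniW R * exp (- 2 * pi * \<i> * of_int (calN R N) * of_real (Re (z m)) / of_real L)
           * qfun R N L W z"
proof
  note m = assms(3)
  define t where "t = \<i> * of_real W / (of_real L :: complex)"
  define x where "x = (\<lambda>j. z j / of_real L)"
  have L0: "(of_real L :: complex) \<noteq> 0" using assms by auto
  have fin: "finite {1..N}" by simp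
  have x1: "(\<lambda>j. shift m (of_real L) z j / of_real L) = x(m := x m + 1)"
    using L0 by (auto simp: x_def shift_def add_divide_distrib)
  have Im1: "(\<lambda>j. (Im (shift m (of_real L) z j))^2) = (\<lambda>j. (Im (z j))^2)"
    by (auto simp: shift_def)
  have S1: "(\<Sum>k\<in>{1..N}. shift m (of_real L) z k) / of_real L = (\<Sum>k\<in>{1..N}. z k) / of_real L + 1"
  proof -
    have "(\<Sum>k\<in>{1..N}. shift m (of_real L) z k) = (\<Sum>k\<in>{1..N}. z k) + of_real L"
      unfolding shift_def by (simp only: sum_upd[OF m fin]) simp
    then show ?thesis using L0 by (simp add: add_divide_distrib)
  qed
  have C1: "Cfac R N L W (shift m (of_real L) z) = Cfac R N L W z"
    unfolding Cfac_def Im1 S1 theta_s_plus1 by simp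
  show "qfun R N L W (shift m (of_real L) z) = sgnL R N * qfun R N L W z"
    unfolding qfun_def C1 x1 macW_1[OF m] x_def[symmetric] by (simp add: mult_ac)
next
  note m = assms(3)
  define t where "t = \<i> * of_real W / (of_real L :: complex)"
  define x where "x = (\<lambda>j. z j / of_real L)"
  have L0: "(of_real L :: complex) \<noteq> 0" using assms by auto
  have fin: "finite {1..N}" by simp
  have xt: "(\<lambda>j. shift m (\<i> * of_real W) z j / of_real L) = x(m := x m + t)"
    using L0 by (auto simp: x_def t_def shift_def add_divide_distrib)
  have Imt: "(\<lambda>j. (Im (shift m (\<i> * of_real W) z j))^2) = (\<lambda>j. (Im (z j))^2)(m := (Im (z m) + W)^2)"
    by (auto simp: shift_def)
  have sumIm: "(\<Sum>j\<in>{1..N}. (Im (shift m (\<i> * of_real W) z j))^2) = (\<Sum>j\<in>{1..N}. (Im (z j))^2) + (2*W*Im (z m) + W^2)"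
    unfolding Imt by (simp only: sum_upd[OF m fin]) (simp add: power2_eq_square algebra_simps)
  have St: "(\<Sum>k\<in>{1..N}. shift m (\<i> * of_real W) z k) / of_real L = (\<Sum>k\<in>{1..N}. x k) + t"
  proof -
    have "(\<Sum>k\<in>{1..N}. shift m (\<i> * of_real W) z k) = (\<Sum>k\<in>{1..N}. z k) + \<i> * of_real W"
      unfolding shift_def by (simp only: sum_upd[OF m fin]) simp
    then show ?thesis using L0 unfolding x_def t_def by (simp add: add_divide_distrib sum_divide_distrib)
  qed
  define c where "c = - pi * of_int (calN R N) / (L * W)"
  define E where "E = complex_of_real (exp (c * (\<Sum>j\<in>{1..N}. (Im (z j))^2)))"
  define F where "F = complex_of_real (exp (c * (2*W*Im (z m) + W^2)))"
  have EF: "complex_of_real (exp (c * (\<Sum>j\<in>{1..N}. (Im (shift m (\<i> * of_real W) z j))^2))) = E * F"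
    unfolding sumIm E_def F_def by (simp add: distrib_left exp_add)
  have knn: "0 \<le> calN R N" using m by (cases R) auto
  have zm: "z m = Complex (Re (z m)) (Im (z m))" by simp
  have core': "F * uu t (x m) ^ nat (calN R N) = exp (- 2 * pi * \<i> * of_int (calN R N) * of_real (Re (z m)) / of_real L)"
  proof -
    have "F * uu t (x m) ^ nat (calN R N) = complex_of_real (exp (- pi * of_int (calN R N) / (L*W) * (2*W*Im (z m) + W^2))) *
      exp (of_nat (nat (calN R N)) * (- pi * \<i> * (\<i> * of_real W / of_real L) - 2*pi*\<i>*(Complex (Re (z m)) (Im (z m)) / of_real L)))"
      unfolding F_def c_def uu_pow t_def x_def by simp
    also have "\<dots> = exp (- 2 * pi * \<i> * of_int (calN R N) * of_real (Re (z m)) / of_real L)"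
      by (rule core[OF knn assms(1,2)])
    finally show ?thesis .
  qed
  show "qfun R N L W (shift m (\<i> * of_real W) z) =
           sgniW R * exp (- 2 * pi * \<i> * of_int (calN R N) * of_real (Re (z m)) / of_real L)
           * qfun R N L W z"
  proof (cases "R = A")
    case False
    have a: "qfun R N L W (shift m (\<i> * of_real W) z) = Cfac R N L W (shift m (\<i> * of_real W) z) * macW R N t (x(m := x m + t))"
      unfolding qfun_def t_def[symmetric] xt ..
    have b: "Cfac R N L W (shift m (\<i> * of_real W) z) = E * F"
      unfolding Cfac_def c_def[symmetric] EF using False by simp
    have "qfun R N L W (shift m (\<i> * of_real W) z) = (E * F) * (sgniW R * uu t (x m) ^ nat (calN R N) * macW R N t x)"
      unfolding a b macW_t[OF m False] ..
    also have "\<dots> = sgniW R * (F * uu t (x m) ^ nat (calN R N)) * (E * macW R N t x)" by (simp only: mult_ac)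
    also have "E * macW R N t x = qfun R N L W z"
      unfolding qfun_def Cfac_def E_def c_def t_def x_def using False by simp
    finally show ?thesis unfolding core' .
  next
    case True
    have "qfun R N L W (shift m (\<i> * of_real W) z) = Cfac R N L W (shift m (\<i> * of_real W) z) * macW A N t (x(m := x m + t))"
      unfolding qfun_def t_def[symmetric] xt True ..
    also have "Cfac R N L W (shift m (\<i> * of_real W) z) = E * F * theta_s N ((\<Sum>k\<in>{1..N}. x k) + t) t"
      unfolding Cfac_def c_def[symmetric] EF t_def[symmetric] St using True by simp
    finally have "qfun R N L W (shift m (\<i> * of_real W) z) = (E * F) * (theta_s N ((\<Sum>k\<in>{1..N}. x k) + t) t * macW A N t (x(m := x m + t)))"
      by (simp only: mult_ac)
    also have "\<dots> = (E * F) * (((\<Prod>i\<in>{1..N}-{m}. - uu t (x m) * exp (2 * pi * \<i> * x i)) *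
     ((if even N then -1 else 1) * exp (- pi * \<i> * t - 2 * pi * \<i> * (\<Sum>k\<in>{1..N}. x k)))) * theta_s N (\<Sum>k\<in>{1..N}. x k) t * macW A N t x)"
      unfolding theta_s_plus_t macW_At[OF m] by (simp only: mult_ac)
    also have "\<dots> = (E * F) * (uu t (x m) ^ N * theta_s N (\<Sum>k\<in>{1..N}. x k) t * macW A N t x)"
      unfolding A_combine[OF m] ..
    also have "\<dots> = (F * uu t (x m) ^ nat (calN R N)) * (E * theta_s N (\<Sum>k\<in>{1..N}. x k) t * macW A N t x)"
      using True by (simp only: mult_ac calN.simps nat_int)
    also have "E * theta_s N (\<Sum>k\<in>{1..N}. x k) t * macW A N t x = qfun R N L W z"
      unfolding qfun_def Cfac_def E_def c_def t_def x_def using True by (simp add: sum_divide_distrib)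
    finally show ?thesis unfolding core' using True by simp
  qed
qed

end
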